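(* For every finite multiset $\Gamma$ of formulas and every formula $\varphi$: if the sequent $\Gamma\Rightarrow\varphi$ is provable in $\mathsf{G4iSLt}$, then $\Gamma\models\varphi$, i.e. for every Kripke model $\mathcal M$ for $\mathsf{iSL}$ and every world $w$ of $\mathcal M$, if $\mathcal M,w\Vdash\psi$ for all $\psi\in\Gamma$ then $\mathcal M,w\Vdash\varphi$.
   Context: Formulas are built by the grammar $\varphi ::= p \mid \bot \mid \varphi\land\varphi \mid \varphi\lor\varphi \mid \varphi\to\varphi \mid \Box\varphi$, with $p$ ranging over a countably infinite set $\mathbb V$ of propositional variables. For a multiset $\Gamma$, $\Box\Gamma=\{\Box\psi:\psi\in\Gamma\}$; a boxed formula is one of the form $\Box\psi$. A Kripke model for $\mathsf{iSL}$ is a tuple $(W,\leq,R,I)$ with $W$ a non-empty set, $\leq,R\subseteq W\times W$, and $I:\mathbb V\to\mathcal P(W)$, such that: $\leq$ is reflexive and transitive; $R$ is transitive and converse well-founded (no infinite chain $w_0Rw_1Rw_2R\cdots$); $(\leq\circ R)\subseteq R$ (i.e. $w\leq u$ and $uRv$ imply $wRv$); $R\subseteq\ \leq$; and for all $p$, if $w\leq v$ and $w\in I(p)$ then $v\in I(p)$. Forcing: $w\Vdash p$ iff $w\in I(p)$; $w\Vdash\bot$ never; $w\Vdash\varphi\land\psi$ iff both; $w\Vdash\varphi\lor\psi$ iff at least one; $w\Vdash\varphi\to\psi$ iff for all $v\geq w$, $v\Vdash\varphi$ implies $v\Vdash\psi$; $w\Vdash\Box\varphi$ iff for all $v$ with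 $wRv$, $v\Vdash\varphi$. A sequent is $\Gamma\Rightarrow\chi$ with $\Gamma$ a finite multiset of formulas and $\chi$ a formula. The sequent calculus $\mathsf{G4iSLt}$ has the following rules, where $p$ is a propositional variable and $\Phi$ always denotes a multiset containing no boxed formula: (⊥L) $\bot,\Gamma\Rightarrow\chi$ (no premise); (IdP) $\Gamma,p\Rightarrow p$ (no premise); (∧L) from $\Gamma,\varphi,\psi\Rightarrow\chi$ infer $\Gamma,\varphi\land\psi\Rightarrow\chi$; (∧R) from $\Gamma\Rightarrow\varphi$ and $\Gamma\Rightarrow\psi$ infer $\Gamma\Rightarrow\varphi\land\psi$; (∨L) from $\Gamma,\varphi\Rightarrow\chi$ and $\Gamma,\psi\Rightarrow\chi$ infer $\Gamma,\varphi\lor\psi\Rightarrow\chi$; (∨R$_i$), $i\in\{1,2\}$: from $\Gamma\Rightarrow\varphi_i$ infer $\Gamma\Rightarrow\varphi_1\lor\varphi_2$; (p→L) from $\Gamma,p,\varphi\Rightarrow\chi$ infer $\Gamma,p,p\to\varphi\Rightarrow\chi$; (→R) from $\Gamma,\varphi\Rightarrow\psi$ infer $\Gamma\Rightarrow\varphi\to\psi$; (□→L) from $\Phi,\Gamma,\psi,\Box\varphi\Rightarrow\varphi$ and $\Phi,\Box\Gamma,\psi\Rightarrow\chi$ infer $\Phi,\Box\Gamma,\Box\varphi\to\psi\Rightarrow\chi$; (SLtR) from $\Phi,\Gamma,\Box\varphi\Rightarrow\varphi$ infer $\Phi,\Box\Gamma\Rightarrow\Box\varphi$; (∧→L) from $\Gamma,\varphi\to(\psi\to\chi)\Rightarrow\delta$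 infer $\Gamma,(\varphi\land\psi)\to\chi\Rightarrow\delta$; (∨→L) from $\Gamma,\varphi\to\chi,\psi\to\chi\Rightarrow\delta$ infer $\Gamma,(\varphi\lor\psi)\to\chi\Rightarrow\delta$; (→→L) from $\Gamma,\psi\to\chi\Rightarrow\varphi\to\psi$ and $\Gamma,\chi\Rightarrow\delta$ infer $\Gamma,(\varphi\to\psi)\to\chi\Rightarrow\delta$. A proof of a sequent $S$ is a finite tree of sequents with root $S$ in which each interior node together with its children forms an instance of a rule (conclusion, premises) and each leaf is the conclusion of a premise-free rule; $S$ is provable if it has a proof. *)

theory Defs
  imports Main "HOL-Library.Multiset"
begin

datatype form =
    FVar nat
  | FBot
  | FAnd form form
  | FOr form form
  | FImp form form
  | FBox form

definition boxed :: "form \<Rightarrow> bool" where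
  "boxed f \<longleftrightarrow> (\<exists>g. f = FBox g)"

definition box_free :: "form multiset \<Rightarrow> bool" where
  "box_free \<Phi> \<longleftrightarrow> (\<forall>f \<in># \<Phi>. \<not> boxed f)"

abbreviation boxms :: "form multiset \<Rightarrow> form multiset" where
  "boxms \<Gamma> \<equiv> image_mset FBox \<Gamma>"

inductive G4iSLt :: "form multiset \<Rightarrow> form \<Rightarrow> bool" where
  BotL: "G4iSLt (add_mset FBot \<Gamma>) \<chi>"
| IdP: "G4iSLt (add_mset (FVar p) \<Gamma>) (FVar p)"
| AndL: "G4iSLt (\<Gamma> + {#\<phi>, \<psi>#}) \<chi> \<Longrightarrow> G4iSLt (add_mset (FAnd \<phi> \<psi>) \<Gamma>) \<chi>"
| AndR: "G4iSLt \<Gamma> \<phi> \<Longrightarrow> G4iSLt \<Gamma> \<psi> \<Longrightarrow> G4iSLt \<Gamma> (FAnd \<phi> \<psi>)"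
| OrL: "G4iSLt (add_mset \<phi> \<Gamma>) \<chi> \<Longrightarrow> G4iSLt (add_mset \<psi> \<Gamma>) \<chi>
        \<Longrightarrow> G4iSLt (add_mset (FOr \<phi> \<psi>) \<Gamma>) \<chi>"
| OrR1: "G4iSLt \<Gamma> \<phi> \<Longrightarrow> G4iSLt \<Gamma> (FOr \<phi> \<psi>)"
| OrR2: "G4iSLt \<Gamma> \<psi> \<Longrightarrow> G4iSLt \<Gamma> (FOr \<phi> \<psi>)"
| PImpL: "G4iSLt (\<Gamma> + {#FVar p, \<phi>#}) \<chi>
        \<Longrightarrow> G4iSLt (\<Gamma> + {#FVar p, FImp (FVar p) \<phi>#}) \<chi>"
| ImpR: "G4iSLt (add_mset \<phi> \<Gamma>) \<psi> \<Longrightarrow> G4iSLt \<Gamma> (FImp \<phi> \<psi>)"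
| BoxImpL: "box_free \<Phi> \<Longrightarrow>
        G4iSLt (\<Phi> + \<Gamma> + {#\<psi>, FBox \<phi>#}) \<phi> \<Longrightarrow>
        G4iSLt (\<Phi> + boxms \<Gamma> + {#\<psi>#}) \<chi> \<Longrightarrow>
        G4iSLt (\<Phi> + boxms \<Gamma> + {#FImp (FBox \<phi>) \<psi>#}) \<chi>"
| SLtR: "box_free \<Phi> \<Longrightarrow>
        G4iSLt (\<Phi> + \<Gamma> + {#FBox \<phi>#}) \<phi> \<Longrightarrow>
        G4iSLt (\<Phi> + boxms \<Gamma>) (FBox \<phi>)"
| AndImpL: "G4iSLt (add_mset (FImp \<phi> (FImp \<psi> \<chi>)) \<Gamma>) \<delta>
        \<Longrightarrow> G4iSLt (add_mset (FImp (FAnd \<phi> \<psi>) \<chi>) \<Gamma>) \<delta>"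
| OrImpL: "G4iSLt (\<Gamma> + {#FImp \<phi> \<chi>, FImp \<psi> \<chi>#}) \<delta>
        \<Longrightarrow> G4iSLt (add_mset (FImp (FOr \<phi> \<psi>) \<chi>) \<Gamma>) \<delta>"
| ImpImpL: "G4iSLt (add_mset (FImp \<psi> \<chi>) \<Gamma>) (FImp \<phi> \<psi>) \<Longrightarrow>
        G4iSLt (add_mset \<chi> \<Gamma>) \<delta> \<Longrightarrow>
        G4iSLt (add_mset (FImp (FImp \<phi> \<psi>) \<chi>) \<Gamma>) \<delta>"

definition kripke_iSL ::
  "'w set \<Rightarrow> ('w \<Rightarrow> 'w \<Rightarrow> bool) \<Rightarrow> ('w \<Rightarrow> 'w \<Rightarrow> bool) \<Rightarrow> (nat \<Rightarrow> 'w set) \<Rightarrow> bool" where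
  "kripke_iSL W le R I \<longleftrightarrow>
     W \<noteq> {} \<and>
     (\<forall>u v. le u v \<longrightarrow> u \<in> W \<and> v \<in> W) \<and>
     (\<forall>u v. R u v \<longrightarrow> u \<in> W \<and> v \<in> W) \<and>
     (\<forall>p. I p \<subseteq> W) \<and>
     (\<forall>w\<in>W. le w w) \<and>
     (\<forall>u v x. le u v \<longrightarrow> le v x \<longrightarrow> le u x) \<and>
     (\<forall>u v x. R u v \<longrightarrow> R v x \<longrightarrow> R u x) \<and>
     \<not> (\<exists>f :: nat \<Rightarrow> 'w. \<forall>n. R (f n) (f (Suc n))) \<and>
     (\<forall>w u v. le w u \<longrightarrow> R u v \<longrightarrow> R w v) \<and>
     (\<forall>u v. R u v \<longrightarrow> le u v) \<and>
     (\<forall>p w v. le w v \<longrightarrow> w \<in> I p \<longrightarrow> v \<in> I p)"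

primrec forces ::
  "('w \<Rightarrow> 'w \<Rightarrow> bool) \<Rightarrow> ('w \<Rightarrow> 'w \<Rightarrow> bool) \<Rightarrow> (nat \<Rightarrow> 'w set) \<Rightarrow> 'w \<Rightarrow> form \<Rightarrow> bool" where
  "forces le R I w (FVar p) = (w \<in> I p)"
| "forces le R I w FBot = False"
| "forces le R I w (FAnd a b) = (forces le R I w a \<and> forces le R I w b)"
| "forces le R I w (FOr a b) = (forces le R I w a \<or> forces le R I w b)"
| "forces le R I w (FImp a b) = (\<forall>v. le w v \<longrightarrow> forces le R I v a \<longrightarrow> forces le R I v b)"
| "forces le R I w (FBox a) = (\<forall>v. R w v \<longrightarrow> forces le R I v a)"

end

theory Submission
  imports Defs
begin

lemma kfacts:
  assumes "kripke_iSL W le R I"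
  shows "le u v \<Longrightarrow> v \<in> W" "R u v \<Longrightarrow> v \<in> W"
    "w \<in> W \<Longrightarrow> le w w" "le u v \<Longrightarrow> le v x \<Longrightarrow> le u x"
    "R u v \<Longrightarrow> R v x \<Longrightarrow> R u x" "le w u \<Longrightarrow> R u v \<Longrightarrow> R w v"
    "R u v \<Longrightarrow> le u v" "le w v \<Longrightarrow> w \<in> I p \<Longrightarrow> v \<in> I p"
    "\<not> (\<exists>f :: nat \<Rightarrow> _. \<forall>n. R (f n) (f (Suc n)))"
  using assms unfolding kripke_iSL_def by (elim conjE; metis)+
lemma persist:
  assumes K: "kripke_iSL W le R I"
  shows "le w v \<Longrightarrow> forces le R I w a \<Longrightarrow> forces le R I v a"
proof (induction a arbitrary: w v)
  case (FVar p) then show ?case using kfacts(8)[OF K] by simp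
next
  case (FImp a b)
  show ?case using FImp.prems kfacts(4)[OF K FImp.prems(1)] by simp
next
  case (FBox a)
  show ?case using FBox.prems kfacts(6)[OF K FBox.prems(1)] by simp
qed auto

lemma cwf:
  assumes K: "kripke_iSL W le R I"
  shows "wf {(y,x). R x y}"
  using kfacts(9)[OF K] unfolding wf_iff_no_infinite_down_chain by auto

lemma loeb:
  assumes K: "kripke_iSL W le R I" and w: "w \<in> W"
    and step: "\<And>v. R w v \<Longrightarrow> forces le R I v (FBox \<phi>) \<Longrightarrow> forces le R I v \<phi>"
  shows "forces le R I w (FBox \<phi>)"
proof -
  have "\<forall>v. R w v \<longrightarrow> forces le R I v \<phi>" (is "\<forall>v. ?P v")
  proof
    fix v
    show "?P v"
    proof (induction v rule: wf_induct[OF cwf[OF K]])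
      case (1 v)
      show ?case
      proof
        assume wv: "R w v"
        have "forces le R I v (FBox \<phi>)"
        proof (simp, intro allI impI)
          fix u assume "R v u"
          moreover have "R w u" using wv \<open>R v u\<close> kfacts(5)[OF K] by blast
          ultimately show "forces le R I u \<phi>" using 1 by auto
        qed
        then show "forces le R I v \<phi>" using step wv by blast
      qed
    qed
  qed
  then show ?thesis by simp
qed

lemma sound:
  assumes K: "kripke_iSL W le R I"
  shows "G4iSLt \<Gamma> \<phi> \<Longrightarrow> \<forall>w\<in>W. (\<forall>\<psi> \<in># \<Gamma>. forces le R I w \<psi>) \<longrightarrow> forces le R I w \<phi>"
proof (induction rule: G4iSLt.induct)
  case (BotL \<Gamma> \<chi>) then show ?case by simp
next
  case (IdP p \<Gamma>) then show ?case by simp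
next
  case (AndL \<Gamma> \<phi> \<psi> \<chi>) then show ?case by simp
next
  case (AndR \<Gamma> \<phi> \<psi>) then show ?case by simp
next
  case (OrL \<phi> \<Gamma> \<chi> \<psi>) then show ?case by auto
next
  case (OrR1 \<Gamma> \<phi> \<psi>) then show ?case by simp
next
  case (OrR2 \<Gamma> \<psi> \<phi>) then show ?case by simp
next
  case (PImpL \<Gamma> p \<phi> \<chi>)
  show ?case
  proof (intro ballI impI)
    fix w assume w: "w \<in> W" and h: "\<forall>\<psi>\<in>#\<Gamma> + {#FVar p, FImp (FVar p) \<phi>#}. forces le R I w \<psi>"
    have "le w w" using kfacts(3)[OF K w] .
    then have "forces le R I w \<phi>" using h by auto
    then show "forces le R I w \<chi>" using PImpL.IH w h by auto
  qed
next
  case (ImpR \<phi> \<Gamma> \<psi>)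
  show ?case
  proof (intro ballI impI)
    fix w assume w: "w \<in> W" and h: "\<forall>\<psi>\<in>#\<Gamma>. forces le R I w \<psi>"
    show "forces le R I w (FImp \<phi> \<psi>)"
    proof (simp, intro allI impI)
      fix v assume v: "le w v" "forces le R I v \<phi>"
      have "v \<in> W" using v kfacts(1)[OF K] by blast
      moreover have "\<forall>x\<in>#\<Gamma>. forces le R I v x" using h persist[OF K v(1)] by blast
      ultimately show "forces le R I v \<psi>" using ImpR.IH v by auto
    qed
  qed
next
  case (BoxImpL \<Phi> \<Gamma> \<psi> \<phi> \<chi>)
  show ?case
  proof (intro ballI impI)
    fix w assume w: "w \<in> W" and h: "\<forall>x\<in>#\<Phi> + boxms \<Gamma> + {#FImp (FBox \<phi>) \<psi>#}. forces le R I w x"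
    have bx: "forces le R I w (FBox \<phi>)"
    proof (rule loeb[OF K w])
      fix v assume wv: "R w v" and bv: "forces le R I v (FBox \<phi>)"
      have lwv: "le w v" using wv K by (meson kfacts)
      have vW: "v \<in> W" using wv K by (meson kfacts)
      have "\<forall>x\<in>#\<Phi>. forces le R I v x" using h persist[OF K lwv] by auto
      moreover have "\<forall>x\<in>#\<Gamma>. forces le R I v x"
      proof
        fix x assume "x \<in># \<Gamma>"
        then have "forces le R I w (FBox x)" using h by (auto simp del: forces.simps)
        then show "forces le R I v x" using wv by simp
      qed
      moreover have "forces le R I v \<psi>" using h lwv bv by auto
      ultimately show "forces le R I v \<phi>" using BoxImpL.IH(1) vW bv by auto
    qed
    have "le w w" using kfacts(3)[OF K w] .
    then have "forces le R I w \<psi>" using h bx by auto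
    then show "forces le R I w \<chi>" using BoxImpL.IH(2) w h by auto
  qed
next
  case (SLtR \<Phi> \<Gamma> \<phi>)
  show ?case
  proof (intro ballI impI)
    fix w assume w: "w \<in> W" and h: "\<forall>x\<in>#\<Phi> + boxms \<Gamma>. forces le R I w x"
    show "forces le R I w (FBox \<phi>)"
    proof (rule loeb[OF K w])
      fix v assume wv: "R w v" and bv: "forces le R I v (FBox \<phi>)"
      have lwv: "le w v" using wv K by (meson kfacts)
      have vW: "v \<in> W" using wv K by (meson kfacts)
      have "\<forall>x\<in>#\<Phi>. forces le R I v x" using h persist[OF K lwv] by auto
      moreover have "\<forall>x\<in>#\<Gamma>. forces le R I v x"
      proof
        fix x assume "x \<in># \<Gamma>"
        then have "forces le R I w (FBox x)" using h by (auto simp del: forces.simps)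
        then show "forces le R I v x" using wv by simp
      qed
      ultimately show "forces le R I v \<phi>" using SLtR.IH vW bv by auto
    qed
  qed
next
  case (AndImpL \<phi> \<psi> \<chi> \<Gamma> \<delta>)
  show ?case
  proof (intro ballI impI)
    fix w assume w: "w \<in> W" and h: "\<forall>x\<in># add_mset (FImp (FAnd \<phi> \<psi>) \<chi>) \<Gamma>. forces le R I w x"
    have "forces le R I w (FImp \<phi> (FImp \<psi> \<chi>))"
    proof (simp, intro allI impI)
      fix v u assume a: "le w v" "forces le R I v \<phi>" "le v u" "forces le R I u \<psi>"
      have "le w u" using kfacts(4)[OF K] a by blast
      moreover have "forces le R I u \<phi>" using persist[OF K a(3) a(2)] .
      moreover have "forces le R I w (FImp (FAnd \<phi> \<psi>) \<chi>)" using h by simp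
      ultimately show "forces le R I u \<chi>" using a(4) by simp
    qed
    then show "forces le R I w \<delta>" using AndImpL.IH w h by auto
  qed
next
  case (OrImpL \<Gamma> \<phi> \<chi> \<psi> \<delta>)
  then show ?case by auto
next
  case (ImpImpL \<psi> \<chi> \<Gamma> \<phi> \<delta>)
  show ?case
  proof (intro ballI impI)
    fix w assume w: "w \<in> W" and h: "\<forall>x\<in># add_mset (FImp (FImp \<phi> \<psi>) \<chi>) \<Gamma>. forces le R I w x"
    have pc: "forces le R I w (FImp \<psi> \<chi>)"
    proof (simp, intro allI impI)
      fix v assume v: "le w v" "forces le R I v \<psi>"
      have "forces le R I v (FImp \<phi> \<psi>)"
        using v persist[OF K _ v(2)] by simp
      then show "forces le R I v \<chi>" using h v by auto
    qed
    then have "forces le R I w (FImp \<phi> \<psi>)" using ImpImpL.IH(1) w h by auto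
    moreover have "le w w" using kfacts(3)[OF K w] .
    ultimately have "forces le R I w \<chi>" using h by auto
    then show "forces le R I w \<delta>" using ImpImpL.IH(2) w h by auto
  qed
qed

theorem mainTheorem4:
  fixes \<Gamma> :: "form multiset" and \<phi> :: form
    and W :: "'w set" and le R :: "'w \<Rightarrow> 'w \<Rightarrow> bool" and I :: "nat \<Rightarrow> 'w set"
  assumes "G4iSLt \<Gamma> \<phi>"
    and "kripke_iSL W le R I"
    and "w \<in> W"
    and "\<forall>\<psi> \<in># \<Gamma>. forces le R I w \<psi>"
  shows "forces le R I w \<phi>"
  using sound[OF assms(2) assms(1)] assms(3,4) by blast

end
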